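(* Let $X$ be an irreducible continuous-time Markov jump process on a finite state space $K$ with transition rates $k(x,y;\beta)\geq 0$ ($x\neq y$) depending on a real parameter $\beta$, such that $k(x,y;\beta)>0$ iff $k(y,x;\beta)>0$, that this set of pairs does not depend on $\beta>0$, and that for every such pair the limit $\phi(x,y)=\lim_{\beta\to\infty}\frac1\beta\log k(x,y;\beta)$ exists (finite). Let $\mathcal{A}$ be the union of all attractors of $K$. Then for every $y\in K$ there exists $x\in\mathcal{A}$ with $\mathcal{U}(y,x)=0$.
   Context: Make $K$ into a graph with an edge $x\sim y$ iff $x\neq y$ and $k(x,y;\beta)>0$. Define $\Gamma(x)=-\max_{y\sim x}\phi(x,y)$ and, for $x\sim y$, $U(x,y)=-\phi(x,y)-\Gamma(x)\geq 0$; set $U(x,x)=+\infty$. A state $y$ with $U(x,y)=0$ is a preferred successor of $x$. A path $D=(x_0,x_1,\dots,x_n)$ is a sequence with $x_{m}\sim x_{m+1}$, and $U(D)=\sum_{m=0}^{n-1}U(x_m,x_{m+1})$. For $x,y\in K$, $\mathcal{U}(x,y)=\min_D U(D)$ over all paths $D$ from $x$ to $y$. A non-empty set $A\subset K$ is an attractor if $\mathcal{U}(x,y)=0$ for all $x\neq y\in A$ and $\mathcal{U}(x,y)>0$ for all $x\in A$, $y\in K\setminus A$. *)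

theory Defs
  imports Complex_Main
begin

definition edge :: "'a set \<Rightarrow> ('a \<Rightarrow> 'a \<Rightarrow> real \<Rightarrow> real) \<Rightarrow> 'a \<Rightarrow> 'a \<Rightarrow> bool" where
  "edge K k x y \<longleftrightarrow> x \<in> K \<and> y \<in> K \<and> x \<noteq> y \<and> (\<forall>\<beta>>0. k x y \<beta> > 0)"

definition Gamma :: "'a set \<Rightarrow> ('a \<Rightarrow> 'a \<Rightarrow> real \<Rightarrow> real) \<Rightarrow> ('a \<Rightarrow> 'a \<Rightarrow> real) \<Rightarrow> 'a \<Rightarrow> real" where
  "Gamma K k \<phi> x = - Max {\<phi> x y | y. edge K k x y}"

definition Ucost :: "'a set \<Rightarrow> ('a \<Rightarrow> 'a \<Rightarrow> real \<Rightarrow> real) \<Rightarrow> ('a \<Rightarrow> 'a \<Rightarrow> real) \<Rightarrow> 'a \<Rightarrow> 'a \<Rightarrow> real" where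
  "Ucost K k \<phi> x y = - \<phi> x y - Gamma K k \<phi> x"

definition is_path :: "'a set \<Rightarrow> ('a \<Rightarrow> 'a \<Rightarrow> real \<Rightarrow> real) \<Rightarrow> 'a list \<Rightarrow> 'a \<Rightarrow> 'a \<Rightarrow> bool" where
  "is_path K k D x y \<longleftrightarrow> D \<noteq> [] \<and> hd D = x \<and> last D = y \<and>
     (\<forall>m < length D - 1. edge K k (D ! m) (D ! Suc m))"

definition path_cost :: "'a set \<Rightarrow> ('a \<Rightarrow> 'a \<Rightarrow> real \<Rightarrow> real) \<Rightarrow> ('a \<Rightarrow> 'a \<Rightarrow> real) \<Rightarrow> 'a list \<Rightarrow> real" where
  "path_cost K k \<phi> D = (\<Sum>m < length D - 1. Ucost K k \<phi> (D ! m) (D ! Suc m))"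

definition calU :: "'a set \<Rightarrow> ('a \<Rightarrow> 'a \<Rightarrow> real \<Rightarrow> real) \<Rightarrow> ('a \<Rightarrow> 'a \<Rightarrow> real) \<Rightarrow> 'a \<Rightarrow> 'a \<Rightarrow> real" where
  "calU K k \<phi> x y = Inf {path_cost K k \<phi> D | D. is_path K k D x y}"

definition attractor :: "'a set \<Rightarrow> ('a \<Rightarrow> 'a \<Rightarrow> real \<Rightarrow> real) \<Rightarrow> ('a \<Rightarrow> 'a \<Rightarrow> real) \<Rightarrow> 'a set \<Rightarrow> bool" where
  "attractor K k \<phi> A \<longleftrightarrow> A \<noteq> {} \<and> A \<subseteq> K \<and>
     (\<forall>x\<in>A. \<forall>y\<in>A. x \<noteq> y \<longrightarrow> calU K k \<phi> x y = 0) \<and>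
     (\<forall>x\<in>A. \<forall>y\<in>K - A. calU K k \<phi> x y > 0)"

definition irreducible_at :: "'a set \<Rightarrow> ('a \<Rightarrow> 'a \<Rightarrow> real \<Rightarrow> real) \<Rightarrow> real \<Rightarrow> bool" where
  "irreducible_at K k \<beta> \<longleftrightarrow>
     (\<forall>x\<in>K. \<forall>y\<in>K. (x, y) \<in> {(a, b). a \<in> K \<and> b \<in> K \<and> a \<noteq> b \<and> k a b \<beta> > 0}\<^sup>*)"

end

theory Submission
  imports Defs
begin

lemma path_of_rtrancl:
  assumes "(u,v) \<in> Q\<^sup>*"
  shows "\<exists>D. D \<noteq> [] \<and> hd D = u \<and> last D = v \<and> (\<forall>m<length D - 1. (D!m, D!Suc m) \<in> Q)"
  using assms
proof (induction rule: rtrancl_induct)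
  case base show ?case by (intro exI[of _ "[u]"]) auto
next
  case (step v w)
  then obtain D where D: "D \<noteq> []" "hd D = u" "last D = v" "\<forall>m<length D - 1. (D!m, D!Suc m) \<in> Q" by blast
  show ?case
  proof (intro exI[of _ "D @ [w]"] conjI allI impI)
    fix m assume m: "m < length (D@[w]) - 1"
    show "((D@[w])!m, (D@[w])!Suc m) \<in> Q"
    proof (cases "m < length D - 1")
      case True thus ?thesis using D(4) by (auto simp: nth_append)
    next
      case False
      then have "m = length D - 1" using m by auto
      then show ?thesis using D step(2) by (auto simp: nth_append last_conv_nth)
    qed
  qed (use D in auto)
qed

lemma rtrancl_of_path:
  "D \<noteq> [] \<Longrightarrow> (\<forall>m<length D - 1. (D!m, D!Suc m) \<in> Q) \<Longrightarrow> (hd D, last D) \<in> Q\<^sup>*"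
proof (induction D)
  case Nil thus ?case by simp
next
  case (Cons x xs)
  show ?case
  proof (cases "xs = []")
    case True thus ?thesis by simp
  next
    case False
    have "\<forall>m<length xs - 1. (xs!m, xs!Suc m) \<in> Q"
    proof (intro allI impI)
      fix m assume "m < length xs - 1"
      then have "Suc m < length (x#xs) - 1" by simp
      then show "(xs!m, xs!Suc m) \<in> Q" using Cons.prems(2)[rule_format, of "Suc m"] by simp
    qed
    then have "(hd xs, last xs) \<in> Q\<^sup>*" using Cons.IH False by blast
    moreover have "(x, hd xs) \<in> Q" using Cons.prems(2)[rule_format, of 0] False
      by (simp add: hd_conv_nth)
    ultimately show ?thesis using False by (simp add: converse_rtrancl_into_rtrancl)
  qed
qed

theorem proposition2:
  fixes K :: "'a set" and k :: "'a \<Rightarrow> 'a \<Rightarrow> real \<Rightarrow> real" and \<phi> :: "'a \<Rightarrow> 'a \<Rightarrow> real"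
  assumes finK: "finite K"
    and nonneg: "\<And>x y \<beta>. x \<in> K \<Longrightarrow> y \<in> K \<Longrightarrow> x \<noteq> y \<Longrightarrow> k x y \<beta> \<ge> 0"
    and symm: "\<And>x y \<beta>. x \<in> K \<Longrightarrow> y \<in> K \<Longrightarrow> x \<noteq> y \<Longrightarrow> k x y \<beta> > 0 \<longleftrightarrow> k y x \<beta> > 0"
    and indep: "\<And>x y \<beta> \<beta>'. x \<in> K \<Longrightarrow> y \<in> K \<Longrightarrow> x \<noteq> y \<Longrightarrow> \<beta> > 0 \<Longrightarrow> \<beta>' > 0 \<Longrightarrow>
                  k x y \<beta> > 0 \<longleftrightarrow> k x y \<beta>' > 0"
    and irred: "\<And>\<beta>. \<beta> > 0 \<Longrightarrow> irreducible_at K k \<beta>"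
    and lim: "\<And>x y. edge K k x y \<Longrightarrow> ((\<lambda>\<beta>. ln (k x y \<beta>) / \<beta>) \<longlongrightarrow> \<phi> x y) at_top"
  shows "\<forall>y\<in>K. \<exists>x\<in>\<Union>{A. attractor K k \<phi> A}. calU K k \<phi> y x = 0"
proof
  have U0: "Ucost K k \<phi> a b \<ge> 0" if e: "edge K k a b" for a b
  proof -
    have fin: "finite {\<phi> a y | y. edge K k a y}"
      by (rule finite_subset[of _ "\<phi> a ` K"]) (auto simp: edge_def finK)
    have "\<phi> a b \<le> Max {\<phi> a y | y. edge K k a y}" using fin e by (intro Max_ge) auto
    then show ?thesis by (simp add: Ucost_def Gamma_def)
  qed
  define Z where "Z = {(a,b). edge K k a b \<and> Ucost K k \<phi> a b = 0}"
  have pc0: "path_cost K k \<phi> D \<ge> 0" if "is_path K k D u v" for D u v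
    using that unfolding path_cost_def is_path_def by (auto intro!: sum_nonneg U0)
  have Zcal: "calU K k \<phi> u v = 0" if uv: "(u,v) \<in> Z\<^sup>*" for u v
  proof -
    obtain D where D: "D \<noteq> []" "hd D = u" "last D = v" "\<forall>m<length D - 1. (D!m, D!Suc m) \<in> Z"
      using path_of_rtrancl[OF uv] by blast
    have p: "is_path K k D u v" using D by (auto simp: is_path_def Z_def)
    have "path_cost K k \<phi> D = 0" unfolding path_cost_def
      using D(4) by (intro sum.neutral) (auto simp: Z_def)
    then show ?thesis unfolding calU_def
    proof (intro cInf_eq_minimum)
      show "0 \<in> {path_cost K k \<phi> D |D. is_path K k D u v}" using p \<open>path_cost K k \<phi> D = 0\<close> by force
    next
      fix c assume "c \<in> {path_cost K k \<phi> D |D. is_path K k D u v}"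
      then show "0 \<le> c" using pc0 by blast
    qed
  qed
  have pos: "\<exists>a b. edge K k a b \<and> Ucost K k \<phi> a b > 0 \<and> Ucost K k \<phi> a b \<le> path_cost K k \<phi> D"
    if p: "is_path K k D u v" and nz: "(u,v) \<notin> Z\<^sup>*" for D u v
  proof -
    have "\<not> (\<forall>m<length D - 1. (D!m, D!Suc m) \<in> Z)"
      using rtrancl_of_path[of D Z] p nz by (auto simp: is_path_def)
    then obtain m where m: "m < length D - 1" "(D!m, D!Suc m) \<notin> Z" by blast
    have e: "edge K k (D!m) (D!Suc m)" using p m(1) by (auto simp: is_path_def)
    have gt: "Ucost K k \<phi> (D!m) (D!Suc m) > 0" using U0[OF e] m(2) e by (auto simp: Z_def)
    have "Ucost K k \<phi> (D!m) (D!Suc m) \<le> path_cost K k \<phi> D"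
      unfolding path_cost_def
      by (rule member_le_sum[where f="\<lambda>m. Ucost K k \<phi> (D!m) (D!Suc m)"])
         (use m(1) p U0 in \<open>auto simp: is_path_def\<close>)
    then show ?thesis using e gt by blast
  qed
  have inK: "v \<in> K" if "(u,v) \<in> Z\<^sup>*" "u \<in> K" for u v
    using that(1)
  proof (induction rule: rtrancl_induct)
    case base then show ?case using that(2) by simp
  next
    case (step a b) then show ?case by (simp add: Z_def edge_def)
  qed
  have conn: "\<exists>D. is_path K k D u v" if "u \<in> K" "v \<in> K" for u v
  proof -
    let ?E = "{(a, b). a \<in> K \<and> b \<in> K \<and> a \<noteq> b \<and> k a b 1 > 0}"
    have "irreducible_at K k 1" using irred by simp
    then have all: "\<forall>x\<in>K. \<forall>y\<in>K. (x,y) \<in> ?E\<^sup>*" unfolding irreducible_at_def .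
    have "(u,v) \<in> ?E\<^sup>*" using bspec[OF bspec[OF all that(1)] that(2)] .
    from path_of_rtrancl[OF this]
    obtain D where D: "D \<noteq> []" "hd D = u" "last D = v" "\<forall>m<length D - 1. (D!m, D!Suc m) \<in> ?E"
      by (elim exE conjE) (rule that)
    have "is_path K k D u v" unfolding is_path_def edge_def
    proof (intro conjI allI impI D(1-3))
      fix m :: nat and \<beta> :: real assume "m < length D - 1" "\<beta> > 0"
      then have "(D!m, D!Suc m) \<in> ?E" using D(4) by blast
      then have h: "D!m \<in> K" "D!Suc m \<in> K" "D!m \<noteq> D!Suc m" "k (D!m) (D!Suc m) 1 > 0" by auto
      then show "0 < k (D ! m) (D ! Suc m) \<beta>" using indep[OF h(1-3), of 1 \<beta>] \<open>\<beta> > 0\<close> by simp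
    next
      fix m assume "m < length D - 1"
      then show "D ! m \<in> K" "D ! Suc m \<in> K" "D ! m \<noteq> D ! Suc m" using D(4) by auto
    qed
    then show ?thesis by blast
  qed
  define reach where "reach z = {w. (z,w) \<in> Z\<^sup>*}" for z
  have finreach: "finite (reach z)" if "z \<in> K" for z
    by (rule finite_subset[OF _ finK]) (unfold reach_def, use inK[OF _ that] in blast)
  fix y assume yK: "y \<in> K"
  obtain x where x: "(y,x) \<in> Z\<^sup>*" and xmin: "\<forall>z. (y,z) \<in> Z\<^sup>* \<longrightarrow> card (reach x) \<le> card (reach z)"
    using ex_has_least_nat[of "\<lambda>z. (y,z) \<in> Z\<^sup>*" y "\<lambda>z. card (reach z)"] by blast
  have xK: "x \<in> K" using inK x yK by blast
  have terminal: "(w,x) \<in> Z\<^sup>*" if "(x,w) \<in> Z\<^sup>*" for w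
  proof -
    have sub: "reach w \<subseteq> reach x" using that by (auto simp: reach_def)
    have "card (reach x) \<le> card (reach w)" using xmin rtrancl_trans[OF x that] by blast
    then have "reach w = reach x" using card_seteq[OF finreach[OF xK] sub] by simp
    moreover have "x \<in> reach x" by (simp add: reach_def)
    ultimately have "x \<in> reach w" by simp
    then show ?thesis by (simp add: reach_def)
  qed
  have att: "attractor K k \<phi> (reach x)"
    unfolding attractor_def
  proof (intro conjI ballI impI)
    show "reach x \<noteq> {}" by (auto simp: reach_def)
    show "reach x \<subseteq> K" unfolding reach_def using inK[OF _ xK] by blast
  next
    fix z w assume "z \<in> reach x" "w \<in> reach x"
    then have "(z,x) \<in> Z\<^sup>*" "(x,w) \<in> Z\<^sup>*" using terminal by (auto simp: reach_def)
    then have "(z,w) \<in> Z\<^sup>*" by (rule rtrancl_trans)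
    then show "calU K k \<phi> z w = 0" by (rule Zcal)
  next
    fix z w assume z: "z \<in> reach x" and w: "w \<in> K - reach x"
    have zK: "z \<in> K" using inK[OF _ xK] z unfolding reach_def by blast
    have nz: "(z,w) \<notin> Z\<^sup>*"
    proof
      assume "(z,w) \<in> Z\<^sup>*"
      moreover have "(x,z) \<in> Z\<^sup>*" using z by (simp add: reach_def)
      ultimately have "(x,w) \<in> Z\<^sup>*" using rtrancl_trans by metis
      then show False using w by (simp add: reach_def)
    qed
    obtain D0 where D0: "is_path K k D0 z w" using conn zK w by blast
    define P where "P = {Ucost K k \<phi> a b | a b. edge K k a b \<and> Ucost K k \<phi> a b > 0}"
    have "P \<subseteq> (\<lambda>(a,b). Ucost K k \<phi> a b) ` (K \<times> K)"
    proof
      fix c assume "c \<in> P"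
      then obtain a b where ab: "edge K k a b" "c = Ucost K k \<phi> a b" unfolding P_def by blast
      show "c \<in> (\<lambda>(a,b). Ucost K k \<phi> a b) ` (K \<times> K)"
        by (rule rev_image_eqI[of "(a,b)"]) (use ab in \<open>auto simp: edge_def\<close>)
    qed
    then have finP: "finite P" using finK by (auto intro: finite_subset)
    have Pne: "P \<noteq> {}" using pos[OF D0 nz] unfolding P_def by blast
    have "\<forall>c\<in>P. c > 0" unfolding P_def by blast
    then have Ppos: "Min P > 0" using Min_in[OF finP Pne] by blast
    have "Min P \<le> calU K k \<phi> z w" unfolding calU_def
    proof (rule cInf_greatest)
      show "{path_cost K k \<phi> D |D. is_path K k D z w} \<noteq> {}" using D0 by blast
    next
      fix c assume "c \<in> {path_cost K k \<phi> D |D. is_path K k D z w}"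
      then obtain D where D: "is_path K k D z w" "c = path_cost K k \<phi> D" by blast
      obtain a b where ab: "edge K k a b" "Ucost K k \<phi> a b > 0" "Ucost K k \<phi> a b \<le> c"
        using pos[OF D(1) nz] D(2) by blast
      have "Min P \<le> Ucost K k \<phi> a b" by (intro Min_le finP) (unfold P_def, use ab in blast)
      then show "Min P \<le> c" using ab by linarith
    qed
    then show "calU K k \<phi> z w > 0" using Ppos by linarith
  qed
  have "x \<in> reach x" by (simp add: reach_def)
  then show "\<exists>x\<in>\<Union>{A. attractor K k \<phi> A}. calU K k \<phi> y x = 0"
    using att Zcal[OF x] by blast
qed

end
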